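(* For every prime $p$ there exists a linear $(2,p,p)$-AONT, i.e. an invertible $p\times p$ matrix over $\mathbb{F}_p$ all of whose $2\times2$ submatrices are invertible.
   Context: A linear $(t,s,q)$-AONT over $\mathbb{F}_q$ is given by an invertible $s\times s$ matrix $M$ over $\mathbb{F}_q$ (the transform being $(y_1,\dots,y_s)=(x_1,\dots,x_s)M^{-1}$); $M$ defines a linear $(t,s,q)$-AONT iff every $t\times t$ submatrix of $M$ is invertible. *)

theory Defs
  imports "Jordan_Normal_Form.DL_Submatrix" "Jordan_Normal_Form.Determinant"
begin

definition linear_AONT :: "nat \<Rightarrow> nat \<Rightarrow> 'a :: field mat \<Rightarrow> bool" where
  "linear_AONT t s M \<longleftrightarrow>
     M \<in> carrier_mat s s \<and> invertible_mat M \<and>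
     (\<forall>I J. I \<subseteq> {..<s} \<longrightarrow> J \<subseteq> {..<s} \<longrightarrow> card I = t \<longrightarrow> card J = t \<longrightarrow>
        invertible_mat (submatrix M I J))"

end

theory Submission
  imports Defs "HOL-Computational_Algebra.Polynomial" "HOL-Number_Theory.Residues"
begin


definition ff :: "'a::field \<Rightarrow> 'a \<Rightarrow> 'a" where
  "ff x y = (if x = 0 then (if y = 0 then 0 else 1) else inverse (x - y))"

lemma inv_diff_nz:
  fixes u v w z :: "'a::field"
  assumes "u * v \<noteq> w * z"
  shows "inverse u * inverse v - inverse w * inverse z \<noteq> 0"
proof
  assume "inverse u * inverse v - inverse w * inverse z = 0"
  hence "inverse (u * v) = inverse (w * z)" by (metis inverse_mult_distrib right_minus_eq)
  hence "u * v = w * z" by (metis inverse_inverse_eq)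
  with assms show False by simp
qed

lemma minor_nz:
  fixes x1 x2 y1 y2 :: "'a::field"
  assumes "x1 \<noteq> x2" "y1 \<noteq> y2"
  shows "ff x1 y1 * ff x2 y2 - ff x1 y2 * ff x2 y1 \<noteq> 0"
proof -
  have gen: "(a - c) * (b - d) \<noteq> (a - d) * (b - c)"
    if "a \<noteq> b" "c \<noteq> d" for a b c d :: 'a
  proof
    assume "(a - c) * (b - d) = (a - d) * (b - c)"
    hence "(a - b) * (c - d) = 0" by (simp add: algebra_simps)
    with that show False by simp
  qed
  show ?thesis
  proof (cases "x1 = 0")
    case True
    then show ?thesis using assms gen[of x1 x2 y1 y2]
      unfolding ff_def by (auto simp: inv_diff_nz)
  next
    case False
    then show ?thesis using assms gen[of x1 x2 y1 y2] inv_diff_nz[of "x1 - y1" "x2 - y2" "x1 - y2" "x2 - y1"]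
      unfolding ff_def by (auto simp: inv_diff_nz)
  qed
qed


lemma char_facts:
  assumes p: "prime p" "card (UNIV::'a::{finite,field} set) = p"
  shows "\<And>k. 0 < k \<Longrightarrow> k < p \<Longrightarrow> of_nat k \<noteq> (0::'a)"
proof -
  have "CHAR('a) dvd p" using CHAR_dvd_CARD[where 'a='a] p by simp
  hence "CHAR('a) = p" using p(1) CHAR_not_1[where 'a='a] by (metis One_nat_def prime_nat_iff)
  thus "\<And>k. 0 < k \<Longrightarrow> k < p \<Longrightarrow> of_nat k \<noteq> (0::'a)"
    by (metis nat_dvd_not_less of_nat_eq_0_iff_char_dvd)
qed

lemma kernel_trivial:
  fixes V :: "'a::{finite,field} \<Rightarrow> 'a"
  assumes p: "prime p" "card (UNIV::'a set) = p"
    and K: "\<And>x. (\<Sum>y\<in>UNIV. ff x y * V y) = 0"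
  shows "V z = 0"
proof -
  note ofnz = char_facts[OF p]
  have p2: "p \<ge> 2" using p(1) prime_ge_2_nat by blast
  show ?thesis
  proof (cases "p = 2")
    case True
    have all01: "y = 0 \<or> y = 1" for y :: 'a
    proof (rule ccontr)
      assume "\<not> (y = 0 \<or> y = 1)"
      hence "card {0, 1, y} = 3" by auto
      moreover have "card {0, 1, y} \<le> card (UNIV :: 'a set)" by (rule card_mono) auto
      ultimately show False using True p(2) by simp
    qed
    hence U: "(UNIV :: 'a set) = {0, 1}" by auto
    have "V 1 = 0" using K[of 0] unfolding U by (simp add: ff_def)
    moreover have "V 0 = 0" using K[of 1] unfolding U by (simp add: ff_def)
    ultimately show ?thesis using all01[of z] by auto
  next
    case False
    hence p3: "p \<ge> 3" using p2 by simp
    let ?U = "UNIV :: 'a set"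
    define C where "C = (\<Prod>d\<in>?U-{0}. d)"
    have Cnz: "C \<noteq> 0" unfolding C_def by simp
    have prodC: "(\<Prod>k\<in>?U-{x}. x - k) = C" for x :: 'a
      unfolding C_def
      by (rule prod.reindex_bij_witness[of _ "\<lambda>d. x - d" "\<lambda>k. x - k"]) auto
    have prodCm: "(\<Prod>k\<in>?U-{x}-{m}. x - k) = C * inverse (x - m)" if "m \<noteq> x" for x m :: 'a
    proof -
      have "C = (x - m) * (\<Prod>k\<in>?U-{x}-{m}. x - k)"
        using prodC[of x] prod.remove[of "?U-{x}" m "\<lambda>k. x - k"] that by simp
      thus ?thesis using that by (simp add: field_simps)
    qed
    have s0: "(\<Sum>d\<in>?U-{0}. inverse d) = 0"
    proof -
      have "(\<Sum>d\<in>?U-{0}. inverse d) = (\<Sum>d\<in>?U-{0}. d)"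
        by (rule sum.reindex_bij_witness[of _ inverse inverse]) auto
      also have "\<dots> = (\<Sum>d\<in>?U. d)"
        using sum.remove[of ?U 0 "\<lambda>d. d"] by simp
      finally have e1: "(\<Sum>d\<in>?U-{0}. inverse d) = (\<Sum>d\<in>?U. d)" .
      have "(\<Sum>d\<in>?U. d) = (\<Sum>d\<in>?U. - d)"
        by (rule sum.reindex_bij_witness[of _ uminus uminus]) auto
      also have "\<dots> = - (\<Sum>d\<in>?U. d)" by (simp add: sum_negf)
      finally have "of_nat 2 * (\<Sum>d\<in>?U. d) = 0" by (simp add: algebra_simps)
      moreover have "of_nat 2 \<noteq> (0::'a)" using ofnz[of 2] p3 by simp
      ultimately show ?thesis using e1 by simp
    qed
    have sumx: "(\<Sum>m\<in>?U-{y}. inverse (y - m)) = 0" for y :: 'a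
    proof -
      have "(\<Sum>m\<in>?U-{y}. inverse (y - m)) = (\<Sum>d\<in>?U-{0}. inverse d)"
        by (rule sum.reindex_bij_witness[of _ "\<lambda>d. y - d" "\<lambda>k. y - k"]) auto
      thus ?thesis using s0 by simp
    qed
    define L where "L y = (\<Prod>k\<in>?U-{y}. [:-k, 1:])" for y
    define Q where "Q = (\<Sum>y\<in>?U. Polynomial.smult (V y) (L y))"
    have polyL: "poly (L y) x = (if x = y then C else 0)" for x y
    proof -
      have "poly (L y) x = (\<Prod>k\<in>?U-{y}. x - k)" unfolding L_def poly_prod by simp
      thus ?thesis using prodC[of y] by (auto intro!: prod_zero)
    qed
    have polyQ: "poly Q x = V x * C" for x
    proof -
      have "poly Q x = (\<Sum>y\<in>?U. V y * (if x = y then C else 0))"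
        unfolding Q_def poly_sum by (simp add: polyL)
      also have "\<dots> = (\<Sum>y\<in>?U. if x = y then V y * C else 0)" by (intro sum.cong) auto
      also have "\<dots> = V x * C" by simp
      finally show ?thesis .
    qed
    have pderivL: "pderiv (L y) = (\<Sum>m\<in>?U-{y}. \<Prod>k\<in>?U-{y}-{m}. [:-k,1:])" for y
      unfolding L_def pderiv_prod by (simp add: pderiv_pCons)
    have polydL: "poly (pderiv (L y)) x = C * inverse (x - y)" for x y
    proof -
      have e: "poly (pderiv (L y)) x = (\<Sum>m\<in>?U-{y}. \<Prod>k\<in>?U-{y}-{m}. x - k)"
        unfolding pderivL poly_sum poly_prod by simp
      show ?thesis
      proof (cases "x = y")
        case True
        have "(\<Sum>m\<in>?U-{y}. \<Prod>k\<in>?U-{y}-{m}. x - k) = (\<Sum>m\<in>?U-{y}. C * inverse (y - m))"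
          using True by (intro sum.cong) (auto simp: prodCm)
        also have "\<dots> = 0" using sumx[of y] by (simp add: sum_distrib_left[symmetric])
        finally show ?thesis using e True by simp
      next
        case False
        have "(\<Sum>m\<in>?U-{y}. \<Prod>k\<in>?U-{y}-{m}. x - k)
             = (\<Sum>m\<in>?U-{y}. if m = x then C * inverse (x - y) else 0)"
        proof (intro sum.cong refl)
          fix m assume m: "m \<in> ?U-{y}"
          show "(\<Prod>k\<in>?U-{y}-{m}. x - k) = (if m = x then C * inverse (x - y) else 0)"
          proof (cases "m = x")
            case True
            have "?U-{y}-{m} = ?U-{x}-{y}" using True by auto
            thus ?thesis using True prodCm[of y x] False by simp
          next
            case F2: False
            have "x \<in> ?U-{y}-{m}" using F2 False by auto
            thus ?thesis using F2 by (auto intro!: prod_zero)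
          qed
        qed
        also have "\<dots> = C * inverse (x - y)" using False by simp
        finally show ?thesis using e by simp
      qed
    qed
    have dQ: "poly (pderiv Q) x = C * (\<Sum>y\<in>?U. V y * inverse (x - y))" for x
    proof -
      have "pderiv Q = (\<Sum>y\<in>?U. Polynomial.smult (V y) (pderiv (L y)))"
        unfolding Q_def using higher_pderiv_sum[of 1 "\<lambda>y. Polynomial.smult (V y) (L y)" ?U]
        by (simp add: pderiv_smult)
      hence "poly (pderiv Q) x = (\<Sum>y\<in>?U. V y * (C * inverse (x - y)))"
        by (simp add: poly_sum polydL)
      thus ?thesis by (simp add: sum_distrib_left algebra_simps)
    qed
    have dQ0: "poly (pderiv Q) x = 0" if "x \<noteq> 0" for x
    proof -
      have "(\<Sum>y\<in>?U. V y * inverse (x - y)) = (\<Sum>y\<in>?U. ff x y * V y)"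
        using that by (simp add: ff_def mult.commute)
      thus ?thesis using K[of x] dQ[of x] by simp
    qed
    have cardU0: "card (?U - {0}) = p - 1" using p(2) by (simp add: card_Diff_singleton)
    have degL: "degree (L y) \<le> p - 1" for y
    proof -
      have "degree (L y) \<le> (\<Sum>k\<in>?U-{y}. degree [:-k, 1:])"
        unfolding L_def using degree_prod_sum_le[of "?U-{y}" "\<lambda>k. [:-k,1:]"] by (simp add: o_def)
      also have "\<dots> = card (?U - {y})" by simp
      also have "\<dots> = p - 1" using p(2) by (simp add: card_Diff_singleton)
      finally show ?thesis .
    qed
    have degQ: "degree Q \<le> p - 1"
      unfolding Q_def by (rule degree_sum_le) (use degL in \<open>auto intro: order.trans[OF degree_smult_le]\<close>)
    have dQz: "pderiv Q = 0"
    proof (rule ccontr)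
      assume nz: "pderiv Q \<noteq> 0"
      have "?U - {0} \<subseteq> {x. poly (pderiv Q) x = 0}" using dQ0 by auto
      hence "card (?U - {0}) \<le> card {x. poly (pderiv Q) x = 0}"
        by (intro card_mono) auto
      also have "\<dots> \<le> degree (pderiv Q)" by (rule card_poly_roots_bound[OF nz])
      also have "\<dots> \<le> p - 2"
      proof (rule degree_le, intro allI impI)
        fix i assume "p - 2 < i"
        hence "degree Q < Suc i" using degQ p2 by simp
        thus "Polynomial.coeff (pderiv Q) i = 0" by (simp add: coeff_pderiv coeff_eq_0)
      qed
      finally show False using cardU0 p2 by simp
    qed
    have coeffQ: "Polynomial.coeff Q (Suc n) = 0" for n
    proof (cases "Suc n < p")
      case True
      have "of_nat (Suc n) * Polynomial.coeff Q (Suc n) = 0"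
        using coeff_pderiv[of Q n] dQz by simp
      moreover have "of_nat (Suc n) \<noteq> (0::'a)" using ofnz[of "Suc n"] True by simp
      ultimately show ?thesis by simp
    next
      case False
      thus ?thesis using degQ by (intro coeff_eq_0) simp
    qed
    have Qc: "Q = [:Polynomial.coeff Q 0:]"
      by (rule poly_eqI) (case_tac n, auto simp: coeffQ)
    define \<kappa> where "\<kappa> = Polynomial.coeff Q 0 * inverse C"
    have Vk: "V x = \<kappa>" for x
    proof -
      have "V x * C = Polynomial.coeff Q 0" using polyQ[of x] Qc by (metis poly_pCons poly_0 mult_zero_right add_0_right)
      thus ?thesis unfolding \<kappa>_def using Cnz by (simp add: field_simps)
    qed
    have "(\<Sum>y\<in>?U. ff 0 y * V y) = ff 0 0 * V 0 + (\<Sum>y\<in>?U-{0}. ff 0 y * V y)"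
      using sum.remove[of ?U 0] by simp
    also have "\<dots> = (\<Sum>y\<in>?U-{0}. \<kappa>)" by (simp add: ff_def Vk)
    also have "\<dots> = of_nat (p - 1) * \<kappa>" using cardU0 by simp
    finally have "of_nat (p - 1) * \<kappa> = 0" using K[of 0] by simp
    moreover have "of_nat (p - 1) \<noteq> (0::'a)" using ofnz[of "p - 1"] p2 by simp
    ultimately show ?thesis using Vk by simp
  qed
qed


lemma inv_from_kernel:
  fixes A :: "'a::field mat"
  assumes A: "A \<in> carrier_mat n n"
    and K: "\<And>v. v \<in> carrier_vec n \<Longrightarrow> A *\<^sub>v v = 0\<^sub>v n \<Longrightarrow> v = 0\<^sub>v n"
  shows "invertible_mat A"
proof -
  have "det A \<noteq> 0" using det_0_iff_vec_prod_zero_field[OF A] K by blast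
  from det_non_zero_imp_unit[OF A this, unfolded Units_def, of "()"]
  obtain B where B: "B \<in> carrier_mat n n" and BA: "B * A = 1\<^sub>m n" and AB: "A * B = 1\<^sub>m n"
    by (auto simp: ring_mat_def)
  show ?thesis unfolding invertible_mat_def inverts_mat_def square_mat.simps
    using A B AB BA by auto
qed

lemma inv_2x2:
  fixes S :: "'a::field mat"
  assumes S: "S \<in> carrier_mat 2 2"
    and d: "S $$ (0,0) * S $$ (1,1) - S $$ (0,1) * S $$ (1,0) \<noteq> 0"
  shows "invertible_mat S"
proof (rule inv_from_kernel[OF S])
  fix v :: "'a vec" assume v: "v \<in> carrier_vec 2" and Sv: "S *\<^sub>v v = 0\<^sub>v 2"
  have e0: "S $$ (0,0) * v $ 0 + S $$ (0,1) * v $ 1 = 0"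
    using arg_cong[OF Sv, of "\<lambda>w. w $ 0"] S v
    by (simp add: scalar_prod_def numeral_2_eq_2)
  have e1: "S $$ (1,0) * v $ 0 + S $$ (1,1) * v $ 1 = 0"
    using arg_cong[OF Sv, of "\<lambda>w. w $ 1"] S v
    by (simp add: scalar_prod_def numeral_2_eq_2)
  let ?a = "S $$ (0,0)" and ?b = "S $$ (0,1)" and ?c = "S $$ (1,0)" and ?d = "S $$ (1,1)"
  have "(?a * ?d - ?b * ?c) * v $ 0 = ?d * (?a * v $ 0 + ?b * v $ 1) - ?b * (?c * v $ 0 + ?d * v $ 1)"
    by (simp add: algebra_simps)
  hence v0: "v $ 0 = 0" using e0 e1 d by simp
  have "(?a * ?d - ?b * ?c) * v $ 1 = ?a * (?c * v $ 0 + ?d * v $ 1) - ?c * (?a * v $ 0 + ?b * v $ 1)"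
    by (simp add: algebra_simps)
  hence v1: "v $ 1 = 0" using e0 e1 d by simp
  show "v = 0\<^sub>v 2"
  proof (rule eq_vecI)
    fix i assume "i < dim_vec (0\<^sub>v 2 :: 'a vec)"
    hence "i = 0 \<or> i = 1" by auto
    thus "v $ i = 0\<^sub>v 2 $ i" using v0 v1 by auto
  qed (use v in auto)
qed

theorem theorem2p12:
  fixes p :: nat
  assumes "prime p" and "card (UNIV :: 'a :: {finite, field} set) = p"
  shows "\<exists>M :: 'a mat. linear_AONT 2 p M"
proof -
  note ofnz = char_facts[OF assms]
  let ?e = "of_nat :: nat \<Rightarrow> 'a"
  have inj: "inj_on ?e {..<p}"
  proof (rule inj_onI)
    fix i j assume i: "i \<in> {..<p}" and j: "j \<in> {..<p}" and eq: "?e i = ?e j"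
    show "i = j"
    proof (rule ccontr)
      assume "i \<noteq> j"
      then consider "i < j" | "j < i" by linarith
      thus False
      proof cases
        case 1
        have "?e j = ?e i + ?e (j - i)" using 1 by (metis le_add_diff_inverse less_imp_le of_nat_add)
        hence "?e (j - i) = 0" using eq by simp
        moreover have "0 < j - i" "j - i < p" using 1 j by auto
        ultimately show False using ofnz by blast
      next
        case 2
        have "?e i = ?e j + ?e (i - j)" using 2 by (metis le_add_diff_inverse less_imp_le of_nat_add)
        hence "?e (i - j) = 0" using eq by simp
        moreover have "0 < i - j" "i - j < p" using 2 i by auto
        ultimately show False using ofnz by blast
      qed
    qed
  qed
  have surj: "?e ` {..<p} = UNIV"
  proof -
    have "card (?e ` {..<p}) = p" using card_image[OF inj] by simp
    thus ?thesis using assms(2) by (metis card_subset_eq finite subset_UNIV)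
  qed
  define M :: "'a mat" where "M = mat p p (\<lambda>(i,j). ff (?e i) (?e j))"
  have Mc: "M \<in> carrier_mat p p" unfolding M_def by simp
  have Minv: "invertible_mat M"
  proof (rule inv_from_kernel[OF Mc])
    fix v :: "'a vec" assume v: "v \<in> carrier_vec p" and Mv: "M *\<^sub>v v = 0\<^sub>v p"
    define V where "V y = v $ (inv_into {..<p} ?e y)" for y
    have Ve: "V (?e j) = v $ j" if "j < p" for j
      unfolding V_def using inv_into_f_f[OF inj] that by simp
    have K: "(\<Sum>y\<in>UNIV. ff x y * V y) = 0" for x
    proof -
      obtain i where i: "i < p" "x = ?e i" using surj by (metis UNIV_I imageE lessThan_iff)
      have "(\<Sum>y\<in>UNIV. ff x y * V y) = (\<Sum>j\<in>{..<p}. ff x (?e j) * V (?e j))"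
        unfolding surj[symmetric] by (subst sum.reindex[OF inj]) simp
      also have "\<dots> = (\<Sum>j\<in>{0..<p}. M $$ (i, j) * v $ j)"
        using i by (intro sum.cong) (auto simp: M_def Ve)
      also have "\<dots> = (M *\<^sub>v v) $ i" using i v Mc by (simp add: scalar_prod_def)
      also have "\<dots> = 0" using Mv i by simp
      finally show ?thesis .
    qed
    have "V y = 0" for y by (rule kernel_trivial[OF assms K])
    show "v = 0\<^sub>v p"
    proof (rule eq_vecI)
      fix j assume "j < dim_vec (0\<^sub>v p :: 'a vec)"
      hence "j < p" by simp
      thus "v $ j = 0\<^sub>v p $ j" using Ve[of j] \<open>\<And>y. V y = 0\<close> by simp
    qed (use v in auto)
  qed
  have Msub: "invertible_mat (submatrix M I J)"
    if I: "I \<subseteq> {..<p}" "card I = 2" and J: "J \<subseteq> {..<p}" "card J = 2" for I J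
  proof -
    have dI: "{i. i < dim_row M \<and> i \<in> I} = I" using I Mc by auto
    have dJ: "{j. j < dim_col M \<and> j \<in> J} = J" using J Mc by auto
    have Sc: "submatrix M I J \<in> carrier_mat 2 2"
      unfolding carrier_mat_def using dim_submatrix[of M I J] dI dJ I J by simp
    have pI: "pick I 0 \<in> I" "pick I 1 \<in> I" "pick I 0 < pick I 1"
      using pick_in_set[of 0 I] pick_in_set[of 1 I] pick_mono[of 1 I 0] I by auto
    have pJ: "pick J 0 \<in> J" "pick J 1 \<in> J" "pick J 0 < pick J 1"
      using pick_in_set[of 0 J] pick_in_set[of 1 J] pick_mono[of 1 J 0] J by auto
    have ent: "submatrix M I J $$ (r, c) = ff (?e (pick I r)) (?e (pick J c))"
      if "r < 2" "c < 2" for r c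
    proof -
      have "pick I r \<in> I" "pick J c \<in> J" using pick_in_set[of r I] pick_in_set[of c J] I J that by auto
      hence "pick I r < p" "pick J c < p" using I J by auto
      thus ?thesis using submatrix_index[of r M I c J] that unfolding dI dJ using I J
        by (simp add: M_def)
    qed
    have ne1: "?e (pick I 0) \<noteq> ?e (pick I 1)"
      using inj_onD[OF inj, of "pick I 0" "pick I 1"] pI I by auto
    have ne2: "?e (pick J 0) \<noteq> ?e (pick J 1)"
      using inj_onD[OF inj, of "pick J 0" "pick J 1"] pJ J by auto
    show ?thesis
    proof (rule inv_2x2[OF Sc])
      have e00: "submatrix M I J $$ (0, 0) = ff (?e (pick I 0)) (?e (pick J 0))" by (rule ent) simp_all
      have e01: "submatrix M I J $$ (0, 1) = ff (?e (pick I 0)) (?e (pick J 1))" by (rule ent) simp_all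
      have e10: "submatrix M I J $$ (1, 0) = ff (?e (pick I 1)) (?e (pick J 0))" by (rule ent) simp_all
      have e11: "submatrix M I J $$ (1, 1) = ff (?e (pick I 1)) (?e (pick J 1))" by (rule ent) simp_all
      show "submatrix M I J $$ (0, 0) * submatrix M I J $$ (1, 1)
          - submatrix M I J $$ (0, 1) * submatrix M I J $$ (1, 0) \<noteq> 0"
        unfolding e00 e01 e10 e11 by (rule minor_nz[OF ne1 ne2])
    qed
  qed
  have "linear_AONT 2 p M"
    unfolding linear_AONT_def using Mc Minv Msub by blast
  thus ?thesis by blast
qed

end
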